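(* Let $K_1\subset\mathbb{R}^n$, $K_2\subset\wedge^2\mathbb{R}^n,\ldots,K_n\subset\wedge^n\mathbb{R}^n$ be proper cones. Suppose that for every $j=2,\ldots,n$ there exists a basis $e_1'(j),\ldots,e_n'(j)$ of $\mathbb{R}^n$ such that $K_j\subseteq K_j'$, where $K_j'\subset\wedge^j\mathbb{R}^n$ is an exterior basic cone defined by this basis. Then for every $j=2,\ldots,n$ the set $T(K_1,\ldots,K_j)$, if it is nonempty, is a cone of rank $j$ in $\mathbb{R}^n$.
   Context: A proper cone is a closed convex cone that is pointed and solid. $\wedge^j\mathbb{R}^n$ is the $j$th exterior power of $\mathbb{R}^n$. An exterior basic cone defined by a basis $e_1',\ldots,e_n'$ is a cone in $\wedge^j\mathbb{R}^n$ spanned (as nonnegative combinations) by vectors $\sigma_{i_1\ldots i_j}(e'_{i_1}\wedge\cdots\wedge e'_{i_j})$, $1\le i_1<\cdots<i_j\le n$, with each fixed sign $\sigma_{i_1\ldots i_j}\in\{\pm1\}$. Define recursively $T(K_1)=K_1\cup(-K_1)$, and for $j\ge2$, $T(K_1,\ldots,K_j)$ is the closure of the set of all $x_1\in\mathbb{R}^n$ for which there exist $x_2\in T(K_1)$, $x_3\in T(K_1,K_2),\ldots,x_j\in T(K_1,\ldots,K_{j-1})$ with $x_1\wedge\cdots\wedge x_j\in\operatorname{int}(K_j)\cup\operatorname{int}(-K_j)$. A closed set $T\subset\mathbb{R}^n$ is a cone of rank $k$ if $\alpha x\in T$ for all $x\in T,\alpha\in\mathbb{R}$, and $T$ contains at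 least one $k$-dimensional subspace and no subspace of higher dimension. *)

theory Defs
  imports "HOL-Analysis.Analysis"
begin

text \<open>
 Model: R^n is real^'n with 'n finite and linearly ordered (the order fixes the
 standard basis order e_1,...,e_n).  The exterior power of degree j is modelled in
 Pluecker coordinates w.r.t. the standard basis e_{i_1} wedge ... wedge e_{i_j}
 (i_1 < ... < i_j): as the linear subspace ext_space j of real^('n set) of
 vectors supported on the j-element subsets of 'n.
\<close>

definition ext_space :: "nat \<Rightarrow> (real ^ ('n::finite set)) set" where
  "ext_space j = {w. \<forall>I. card I \<noteq> j \<longrightarrow> w $ I = 0}"

text \<open>Wedge product of f 0, ..., f (j-1): coordinate at a j-subset I is the j x j minor
 of the rows of I (in increasing order), computed by the Leibniz formula.\<close>
definition wedge :: "nat \<Rightarrow> (nat \<Rightarrow> real ^ ('n::{finite,linorder})) \<Rightarrow> real ^ ('n set)" where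
  "wedge j f = (\<chi> I. if card I = j then
      (\<Sum>p\<in>{p. p permutes {0..<j}}.
          of_int (sign p) * (\<Prod>a\<in>{0..<j}. f a $ (sorted_list_of_set I ! p a)))
     else 0)"

definition int_in :: "'a::real_normed_vector set \<Rightarrow> 'a set \<Rightarrow> 'a set" where
  "int_in W K = {x \<in> K. \<exists>e>0. \<forall>y\<in>W. dist y x < e \<longrightarrow> y \<in> K}"

definition proper_cone_in :: "'a::real_normed_vector set \<Rightarrow> 'a set \<Rightarrow> bool" where
  "proper_cone_in W K \<longleftrightarrow> K \<subseteq> W \<and> closed K \<and> convex K \<and>
     (\<forall>x\<in>K. \<forall>c::real. c \<ge> 0 \<longrightarrow> c *\<^sub>R x \<in> K) \<and>
     K \<inter> uminus ` K = {0} \<and> int_in W K \<noteq> {}"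

definition ext_basic_cone ::
  "nat \<Rightarrow> ('n::{finite,linorder} \<Rightarrow> real ^ ('n::{finite,linorder})) \<Rightarrow> (('n::{finite,linorder}) set \<Rightarrow> real) \<Rightarrow> (real ^ (('n::{finite,linorder}) set)) set" where
  "ext_basic_cone j e' \<sigma> =
     {\<Sum>I\<in>{I. card I = j}. c I *\<^sub>R (\<sigma> I *\<^sub>R wedge j (\<lambda>a. e' (sorted_list_of_set I ! a))) | c.
        \<forall>I. c I \<ge> 0}"

definition is_ext_basic_cone :: "nat \<Rightarrow> (('n::{finite,linorder}) \<Rightarrow> real ^ ('n::{finite,linorder})) \<Rightarrow> (real ^ (('n::{finite,linorder}) set)) set \<Rightarrow> bool" where
  "is_ext_basic_cone j e' K' \<longleftrightarrow>
     (\<exists>\<sigma>. (\<forall>I. \<sigma> I = 1 \<or> \<sigma> I = -1) \<and> K' = ext_basic_cone j e' \<sigma>)"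

definition is_basis :: "('n::finite \<Rightarrow> real ^ 'n) \<Rightarrow> bool" where
  "is_basis e' \<longleftrightarrow> inj e' \<and> independent (range e') \<and> span (range e') = UNIV"

text \<open>T K1 K j = T(K_1,...,K_j) for j \<ge> 1 (K j = K_j for j \<ge> 2). In the wedge,
 f 0 = x_1 and f i = x_{i+1} \<in> T(K_1,...,K_i) for 1 \<le> i \<le> j-1.\<close>
fun T :: "(real ^ ('n::{finite,linorder})) set \<Rightarrow> (nat \<Rightarrow> (real ^ (('n::{finite,linorder}) set)) set) \<Rightarrow> nat \<Rightarrow> (real ^ ('n::{finite,linorder})) set" where
  "T K1 K 0 = {}"
| "T K1 K (Suc 0) = K1 \<union> uminus ` K1"
| "T K1 K (Suc (Suc m)) = closure {x. \<exists>f. f 0 = x \<and> (\<forall>i\<in>{1..Suc m}. f i \<in> T K1 K i) \<and>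
      wedge (Suc (Suc m)) f \<in> int_in (ext_space (Suc (Suc m))) (K (Suc (Suc m)))
                              \<union> int_in (ext_space (Suc (Suc m))) (uminus ` K (Suc (Suc m)))}"

definition cone_of_rank :: "(real ^ 'n::finite) set \<Rightarrow> nat \<Rightarrow> bool" where
  "cone_of_rank S k \<longleftrightarrow> closed S \<and> (\<forall>x\<in>S. \<forall>\<alpha>::real. \<alpha> *\<^sub>R x \<in> S) \<and>
     (\<exists>L. subspace L \<and> dim L = k \<and> L \<subseteq> S) \<and>
     (\<forall>L. subspace L \<and> L \<subseteq> S \<longrightarrow> dim L \<le> k)"

end

theory Submission
  imports Defs Jordan_Normal_Form.Determinant
begin

lemma wedge_det: "wedge j (f::nat \<Rightarrow> real^'n::{finite,linorder}) $ I = (if card I = j then Determinant.det (mat j j (\<lambda>(a,r). f a $ (sorted_list_of_set I ! r))) else 0)"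
  unfolding wedge_def Determinant.det_def by simp

lemma wedge_ident:
  fixes f :: "nat \<Rightarrow> real^'n::{finite,linorder}"
  assumes "a < j" "b < j" "a \<noteq> b" "f a = f b"
  shows "wedge j f = 0"
proof -
  have "wedge j f $ I = 0" for I
  proof (cases "card I = j")
    case True
    have "Determinant.det (mat j j (\<lambda>(a,r). f a $ (sorted_list_of_set I ! r))) = 0"
      apply (rule det_identical_rows[of _ j a b])
      using assms by (auto simp: Matrix.row_def)
    then show ?thesis by (simp add: wedge_det)
  qed (simp add: wedge_det)
  then show ?thesis by (simp add: Finite_Cartesian_Product.vec_eq_iff)
qed

lemma wedge_perm:
  fixes f :: "nat \<Rightarrow> real^'n::{finite,linorder}"
  assumes "p permutes {0..<j}"
  shows "wedge j (f \<circ> p) = of_int (sign p) *\<^sub>R wedge j f"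
proof -
  have "wedge j (f \<circ> p) $ I = of_int (sign p) * wedge j f $ I" for I
  proof (cases "card I = j")
    case True
    have "Determinant.det (mat j j (\<lambda>(i,r). (mat j j (\<lambda>(a,r). f a $ (sorted_list_of_set I ! r))) $$ (p i, r)))
      = of_int (sign p) * Determinant.det (mat j j (\<lambda>(a,r). f a $ (sorted_list_of_set I ! r)))"
      by (rule det_permute_rows[OF _ assms]) simp
    moreover have "mat j j (\<lambda>(i,r). (mat j j (\<lambda>(a,r). f a $ (sorted_list_of_set I ! r))) $$ (p i, r))
       = mat j j (\<lambda>(a,r). (f \<circ> p) a $ (sorted_list_of_set I ! r))"
    proof (rule eq_matI)
      fix i r assume "i < dim_row (mat j j (\<lambda>(a,r). (f \<circ> p) a $ (sorted_list_of_set I ! r)))" "r < dim_col (mat j j (\<lambda>(a,r). (f \<circ> p) a $ (sorted_list_of_set I ! r)))"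
      then have "i < j" "r < j" by simp_all
      moreover have "p i < j" using permutes_in_image[OF assms, of i] \<open>i < j\<close> by simp
      ultimately show "mat j j (\<lambda>(i,r). (mat j j (\<lambda>(a,r). f a $ (sorted_list_of_set I ! r))) $$ (p i, r)) $$ (i, r) =
         mat j j (\<lambda>(a,r). (f \<circ> p) a $ (sorted_list_of_set I ! r)) $$ (i, r)" by simp
    qed simp_all
    ultimately show ?thesis using True by (simp add: wedge_det)
  qed (simp add: wedge_det)
  then show ?thesis by (simp add: Finite_Cartesian_Product.vec_eq_iff)
qed


lemma remove1_nth_distinct:
  assumes "distinct xs" "k < length xs" "r < length xs - 1"
  shows "remove1 (xs ! k) xs ! r = xs ! (if r < k then r else Suc r)"
proof -
  have xs: "xs = take k xs @ xs ! k # drop (Suc k) xs" using assms(2) by (simp add: id_take_nth_drop)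
  have nin: "xs ! k \<notin> set (take k xs)"
  proof
    assume "xs ! k \<in> set (take k xs)"
    then obtain i where "i < length (take k xs)" "take k xs ! i = xs ! k" by (auto simp: in_set_conv_nth)
    then have "i < k" "xs ! i = xs ! k" by auto
    then show False using nth_eq_iff_index_eq[OF assms(1)] assms(2) by force
  qed
  have "remove1 (xs ! k) xs = take k xs @ drop (Suc k) xs"
    by (subst xs) (simp add: remove1_append nin)
  then show ?thesis using assms(2,3)
    by (auto simp: nth_append min_def)
qed

lemma sorted_remove_nth:
  fixes J :: "'a::linorder set"
  assumes "finite J" "k < card J" "r < card J - 1"
  shows "sorted_list_of_set (J - {sorted_list_of_set J ! k}) ! r =
     sorted_list_of_set J ! (if r < k then r else Suc r)"
  using assms by (simp add: sorted_list_of_set_remove remove1_nth_distinct)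

lemma wedge_laplace:
  fixes g :: "nat \<Rightarrow> real^'n::{finite,linorder}"
  assumes J: "card J = Suc j"
  shows "wedge (Suc j) g $ J = (\<Sum>k<Suc j. (-1)^k * (g 0 $ (sorted_list_of_set J ! k)) *
      (wedge j (\<lambda>a. g (Suc a)) $ (J - {sorted_list_of_set J ! k})))"
proof -
  let ?s = "sorted_list_of_set J"
  define A where "A = mat (Suc j) (Suc j) (\<lambda>(a,r). g a $ (?s ! r))"
  have A: "A \<in> carrier_mat (Suc j) (Suc j)" by (simp add: A_def)
  have fin: "finite J" using J card.infinite by fastforce
  have "Determinant.det A = (\<Sum>k<Suc j. A $$ (0,k) * cofactor A 0 k)"
    by (rule laplace_expansion_row[OF A]) simp
  also have "\<dots> = (\<Sum>k<Suc j. (-1)^k * (g 0 $ (?s ! k)) *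
      (wedge j (\<lambda>a. g (Suc a)) $ (J - {?s ! k})))"
  proof (rule sum.cong[OF refl])
    fix k assume k: "k \<in> {..<Suc j}"
    have ck: "card (J - {?s ! k}) = j"
    proof -
      have "?s ! k \<in> set ?s" by (rule nth_mem) (use k J in simp)
      then show ?thesis using J fin by (simp add: card_Diff_singleton)
    qed
    have "mat_delete A 0 k = mat j j (\<lambda>(a,r). g (Suc a) $ (sorted_list_of_set (J - {?s ! k}) ! r))"
    proof (rule eq_matI)
      fix a r assume "a < dim_row (mat j j (\<lambda>(a,r). g (Suc a) $ (sorted_list_of_set (J - {?s ! k}) ! r)))"
        "r < dim_col (mat j j (\<lambda>(a,r). g (Suc a) $ (sorted_list_of_set (J - {?s ! k}) ! r)))"
      then have ar: "a < j" "r < j" by simp_all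
      have "sorted_list_of_set (J - {?s ! k}) ! r = ?s ! (if r < k then r else Suc r)"
        using sorted_remove_nth[OF fin, of k r] k ar J by simp
      then show "mat_delete A 0 k $$ (a, r) = mat j j (\<lambda>(a,r). g (Suc a) $ (sorted_list_of_set (J - {?s ! k}) ! r)) $$ (a, r)"
        using ar k unfolding mat_delete_def A_def by simp
    qed (simp_all add: mat_delete_def A_def)
    then show "A $$ (0,k) * cofactor A 0 k = (-1)^k * (g 0 $ (?s ! k)) *
      (wedge j (\<lambda>a. g (Suc a)) $ (J - {?s ! k}))"
      using k ck unfolding cofactor_def by (simp add: wedge_det A_def)
  qed
  finally show ?thesis using J by (simp add: wedge_det A_def)
qed

lemma prod_upd_remove:
  assumes "k < j"
  shows "(\<Prod>a\<in>{0..<j}. ((f::nat \<Rightarrow> real^'n)(k := x)) a $ (g a)) = x $ g k * (\<Prod>a\<in>{0..<j}-{k}. f a $ (g a))"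
proof -
  have "(\<Prod>a\<in>{0..<j}. (f(k := x)) a $ (g a)) = (f(k := x)) k $ (g k) * (\<Prod>a\<in>{0..<j}-{k}. (f(k := x)) a $ (g a))"
    by (rule prod.remove) (use assms in auto)
  also have "(\<Prod>a\<in>{0..<j}-{k}. (f(k := x)) a $ (g a)) = (\<Prod>a\<in>{0..<j}-{k}. f a $ (g a))"
    by (rule prod.cong) auto
  finally show ?thesis by simp
qed

lemma wedge_row_expand:
  fixes f :: "nat \<Rightarrow> real^'n::{finite,linorder}"
  assumes "k < j"
  shows "wedge j (f(k := x)) $ I = (if card I = j then (\<Sum>p\<in>{p. p permutes {0..<j}}. of_int (sign p) *
      (x $ (sorted_list_of_set I ! p k) * (\<Prod>a\<in>{0..<j}-{k}. f a $ (sorted_list_of_set I ! p a)))) else 0)"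
  unfolding wedge_def prod_upd_remove[OF assms] by simp

lemma wedge_row_linear:
  fixes f :: "nat \<Rightarrow> real^'n::{finite,linorder}"
  assumes "k < j"
  shows "linear (\<lambda>x. wedge j (f(k := x)))"
proof (rule linearI)
  fix x y :: "real^'n::{finite,linorder}"
  show "wedge j (f(k := x + y)) = wedge j (f(k := x)) + wedge j (f(k := y))"
    by (simp add: Finite_Cartesian_Product.vec_eq_iff wedge_row_expand[OF assms] sum.distrib[symmetric] algebra_simps)
next
  fix c :: real and x :: "real^'n::{finite,linorder}"
  show "wedge j (f(k := c *\<^sub>R x)) = c *\<^sub>R wedge j (f(k := x))"
    by (simp add: Finite_Cartesian_Product.vec_eq_iff wedge_row_expand[OF assms] sum_distrib_left algebra_simps)
qed

lemma wedge_replace: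
  fixes f :: "nat \<Rightarrow> real^'n::{finite,linorder}"
  assumes "k0 < j"
  shows "wedge j (f(k0 := (\<Sum>k<j. t k *\<^sub>R f k))) = t k0 *\<^sub>R wedge j f"
proof -
  have lin: "linear (\<lambda>x. wedge j (f(k0 := x)))" by (rule wedge_row_linear[OF assms])
  have "wedge j (f(k0 := (\<Sum>k<j. t k *\<^sub>R f k))) = (\<Sum>k<j. t k *\<^sub>R wedge j (f(k0 := f k)))"
    using linear_sum[OF lin, of "\<lambda>k. t k *\<^sub>R f k" "{..<j}"] linear_scale[OF lin] by simp
  also have "\<dots> = (\<Sum>k<j. if k = k0 then t k *\<^sub>R wedge j f else 0)"
  proof (rule sum.cong[OF refl])
    fix k assume k: "k \<in> {..<j}"
    show "t k *\<^sub>R wedge j (f(k0 := f k)) = (if k = k0 then t k *\<^sub>R wedge j f else 0)"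
    proof (cases "k = k0")
      case False
      have "wedge j (f(k0 := f k)) = 0"
        by (rule wedge_ident[of k0 j k]) (use k assms False in auto)
      then show ?thesis using False by simp
    qed simp
  qed
  also have "\<dots> = t k0 *\<^sub>R wedge j f" using assms by (simp add: sum.delta)
  finally show ?thesis .
qed

lemma wedge_cong:
  fixes f g :: "nat \<Rightarrow> real^'n::{finite,linorder}"
  assumes "\<And>a. a < m \<Longrightarrow> f a = g a"
  shows "wedge m f = wedge m g"
proof -
  have "wedge m f $ I = wedge m g $ I" for I
    unfolding wedge_def by (auto intro!: sum.cong prod.cong simp: assms)
  then show ?thesis by (simp add: Finite_Cartesian_Product.vec_eq_iff)
qed

lemma wedge_inj_sign:
  fixes e' :: "'n::{finite,linorder} \<Rightarrow> real^('n::{finite,linorder})" and \<phi> :: "nat \<Rightarrow> 'n::{finite,linorder}"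
  assumes inj: "inj_on \<phi> {0..<m}"
  shows "wedge m (e' \<circ> \<phi>) = wedge m (\<lambda>a. e' (sorted_list_of_set (\<phi> ` {0..<m}) ! a)) \<or>
         wedge m (e' \<circ> \<phi>) = - wedge m (\<lambda>a. e' (sorted_list_of_set (\<phi> ` {0..<m}) ! a))"
proof -
  define S where "S = \<phi> ` {0..<m}"
  define s where "s = sorted_list_of_set S"
  have lens: "length s = m" using inj by (simp add: s_def S_def card_image)
  have sets: "set s = S" by (simp add: s_def S_def)
  have ds: "distinct s" by (simp add: s_def)
  define \<pi> where "\<pi> a = (if a < m then (SOME i. i < m \<and> s ! i = \<phi> a) else a)" for a
  have mem: "\<phi> a \<in> set s" if "a < m" for a using that sets by (auto simp: S_def)
  have ex: "\<exists>i. i < m \<and> s ! i = \<phi> a" if "a < m" for a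
    using mem[OF that] lens by (auto simp: in_set_conv_nth)
  have sp: "s ! \<pi> a = \<phi> a" and pil: "\<pi> a < m" if "a < m" for a
    using someI_ex[OF ex[OF that]] that by (auto simp: \<pi>_def)
  have injp: "inj_on \<pi> {0..<m}"
  proof (rule inj_onI)
    fix a b assume ab: "a \<in> {0..<m}" "b \<in> {0..<m}" "\<pi> a = \<pi> b"
    then have "\<phi> a = \<phi> b" using sp by (metis atLeastLessThan_iff)
    then show "a = b" using inj ab by (auto dest: inj_onD)
  qed
  have "\<pi> ` {0..<m} = {0..<m}" by (rule endo_inj_surj) (use pil injp in auto)
  then have bij: "bij_betw \<pi> {0..<m} {0..<m}" using injp by (simp add: bij_betw_def)
  have perm: "\<pi> permutes {0..<m}" by (rule bij_imp_permutes[OF bij]) (simp add: \<pi>_def)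
  have "wedge m (e' \<circ> \<phi>) = wedge m ((\<lambda>a. e' (s ! a)) \<circ> \<pi>)"
    by (rule wedge_cong) (simp add: sp)
  also have "\<dots> = of_int (sign \<pi>) *\<^sub>R wedge m (\<lambda>a. e' (s ! a))" by (rule wedge_perm[OF perm])
  finally show ?thesis unfolding s_def S_def by (auto simp: sign_def)
qed

lemma wedge_axis:
  fixes I :: "'n::{finite,linorder} set"
  assumes cI: "card I = m"
  shows "wedge m (\<lambda>a. axis (sorted_list_of_set I ! a) (1::real)) = axis I 1"
proof -
  let ?s = "sorted_list_of_set I"
  have finI: "finite I" by simp
  have "wedge m (\<lambda>a. axis (?s ! a) (1::real)) $ I' = axis I 1 $ I'" for I'
  proof (cases "card I' = m")
    case False
    then have "I' \<noteq> I" using cI by auto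
    then show ?thesis using False by (simp add: wedge_def axis_def)
  next
    case True
    let ?s' = "sorted_list_of_set I'"
    have ls: "length ?s = m" "length ?s' = m" using cI True by auto
    show ?thesis
    proof (cases "I' = I")
      case True
      have pr: "(\<Prod>a\<in>{0..<m}. axis (?s ! a) (1::real) $ (?s ! p a)) = (if p = id then 1 else 0)"
        if p: "p permutes {0..<m}" for p
      proof (cases "p = id")
        case True then show ?thesis by (simp add: axis_def)
      next
        case False
        then obtain a where a: "p a \<noteq> a" by (metis eq_id_iff)
        then have am: "a < m" using permutes_not_in[OF p, of a] by auto
        have "p a < m" using permutes_in_image[OF p, of a] am by simp
        then have "?s ! p a \<noteq> ?s ! a" using a am ls nth_eq_iff_index_eq[of ?s] by auto
        then have "axis (?s ! a) (1::real) $ (?s ! p a) = 0" by (simp add: axis_def)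
        then show ?thesis using False am by (auto intro: prod_zero)
      qed
      have "(\<Sum>p\<in>{p. p permutes {0..<m}}. of_int (sign p) * (\<Prod>a\<in>{0..<m}. axis (?s ! a) (1::real) $ (?s ! p a)))
          = (\<Sum>p\<in>{p. p permutes {0..<m}}. if p = id then 1 else 0)"
        by (rule sum.cong) (auto simp: pr)
      also have "\<dots> = 1" using permutes_id[of "{0..<m}"] by (simp add: sum.delta finite_permutations)
      finally show ?thesis using True cI by (simp add: wedge_def)
    next
      case False
      have "\<not> I \<subseteq> I'" using False cI True by (metis card_subset_eq finite)
      then obtain x where x: "x \<in> I" "x \<notin> I'" by auto
      then obtain a where a: "a < m" "?s ! a = x" using ls by (metis in_set_conv_nth set_sorted_list_of_set finI)
      have pr: "(\<Prod>a\<in>{0..<m}. axis (?s ! a) (1::real) $ (?s' ! p a)) = 0"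
        if p: "p permutes {0..<m}" for p
      proof -
        have "p a < m" using permutes_in_image[OF p, of a] a by simp
        then have "?s' ! p a \<in> I'" using ls by (metis nth_mem set_sorted_list_of_set finite)
        then have "axis (?s ! a) (1::real) $ (?s' ! p a) = 0" using a x by (auto simp: axis_def)
        then show ?thesis using a by (auto intro: prod_zero)
      qed
      have "wedge m (\<lambda>a. axis (?s ! a) (1::real)) $ I' = 0" using True by (simp add: wedge_def pr)
      moreover have "axis I (1::real) $ I' = 0" using False by (simp add: axis_def)
      ultimately show ?thesis by simp
    qed
  qed
  then show ?thesis by (simp add: Finite_Cartesian_Product.vec_eq_iff)
qed


definition Eb :: "nat \<Rightarrow> ('n::{finite,linorder} \<Rightarrow> real^('n::{finite,linorder})) \<Rightarrow> 'n set \<Rightarrow> real^('n set)" where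
  "Eb m e' S = wedge m (\<lambda>a. e' (sorted_list_of_set S ! a))"

lemma wedge_span:
  fixes e' :: "'n::{finite,linorder} \<Rightarrow> real^('n::{finite,linorder})" and g :: "nat \<Rightarrow> real^('n::{finite,linorder})"
  assumes sp: "span (range e') = UNIV"
  shows "wedge m g \<in> span (Eb m e' ` {S. card S = m})"
proof -
  let ?E = "Eb m e' ` {S. card S = m}"
  have claim: "\<forall>g. (\<forall>a. k \<le> a \<longrightarrow> a < m \<longrightarrow> g a \<in> range e') \<longrightarrow> wedge m g \<in> span ?E" for k
  proof (induction k)
    case 0
    show ?case
    proof (intro allI impI)
      fix g :: "nat \<Rightarrow> real^('n::{finite,linorder})" assume h: "\<forall>a. 0 \<le> a \<longrightarrow> a < m \<longrightarrow> g a \<in> range e'"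
      define \<phi> where "\<phi> a = (SOME i. g a = e' i)" for a
      have gphi: "g a = e' (\<phi> a)" if "a < m" for a
      proof -
        have "\<exists>i. g a = e' i" using h that by auto
        then show ?thesis unfolding \<phi>_def by (rule someI_ex)
      qed
      have w: "wedge m g = wedge m (e' \<circ> \<phi>)" by (rule wedge_cong) (simp add: gphi)
      show "wedge m g \<in> span ?E"
      proof (cases "inj_on \<phi> {0..<m}")
        case True
        have c: "card (\<phi> ` {0..<m}) = m" using True by (simp add: card_image)
        have "Eb m e' (\<phi> ` {0..<m}) \<in> ?E" using c by auto
        then have "Eb m e' (\<phi> ` {0..<m}) \<in> span ?E" by (rule span_base)
        then show ?thesis using wedge_inj_sign[OF True, of e'] w unfolding Eb_def
          by (metis span_neg)
      next
        case False
        then obtain a b where ab: "a < m" "b < m" "a \<noteq> b" "\<phi> a = \<phi> b"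
          unfolding inj_on_def by auto
        have "wedge m g = 0" by (rule wedge_ident[of a m b]) (use ab gphi in auto)
        then show ?thesis by (simp add: span_zero)
      qed
    qed
  next
    case (Suc k)
    show ?case
    proof (intro allI impI)
      fix g :: "nat \<Rightarrow> real^('n::{finite,linorder})" assume h: "\<forall>a. Suc k \<le> a \<longrightarrow> a < m \<longrightarrow> g a \<in> range e'"
      show "wedge m g \<in> span ?E"
      proof (cases "k < m")
        case False
        then show ?thesis using Suc.IH h by auto
      next
        case True
        have "g k \<in> span (range e')" using sp by simp
        then obtain u where u: "g k = (\<Sum>v\<in>range e'. u v *\<^sub>R v)"
          using span_finite[of "range e'"] by auto
        have lin: "linear (\<lambda>x. wedge m (g(k := x)))" by (rule wedge_row_linear[OF True])
        have "wedge m g = wedge m (g(k := (\<Sum>v\<in>range e'. u v *\<^sub>R v)))" using u[symmetric] by simp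
        also have "\<dots> = (\<Sum>v\<in>range e'. u v *\<^sub>R wedge m (g(k := v)))"
          using linear_sum[OF lin, of "\<lambda>v. u v *\<^sub>R v" "range e'"] linear_scale[OF lin] by simp
        also have "\<dots> \<in> span ?E"
        proof (rule span_sum)
          fix v assume v: "v \<in> range e'"
          have "wedge m (g(k := v)) \<in> span ?E"
            using Suc.IH[rule_format, of "g(k := v)"] h v by (auto simp: le_Suc_eq)
          then show "u v *\<^sub>R wedge m (g(k := v)) \<in> span ?E" by (rule span_scale)
        qed
        finally show ?thesis .
      qed
    qed
  qed
  show ?thesis using claim[of m] by auto
qed

lemma Eb_indep:
  fixes e' :: "'n::{finite,linorder} \<Rightarrow> real^('n::{finite,linorder})"
  assumes b: "is_basis e'"
  shows "inj_on (Eb m e') {S. card S = m} \<and> independent (Eb m e' ` {S. card S = m})"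
proof -
  let ?M = "{S::'n set. card S = m}"
  let ?E = "Eb m e' ` ?M"
  let ?D = "(\<lambda>I. axis I (1::real)) ` ?M"
  have sp: "span (range e') = UNIV" using b by (simp add: is_basis_def)
  have DE: "?D \<subseteq> span ?E"
  proof
    fix x assume "x \<in> ?D"
    then obtain I where I: "card I = m" "x = axis I 1" by auto
    then have "x = wedge m (\<lambda>a. axis (sorted_list_of_set I ! a) (1::real))" using wedge_axis by metis
    then show "x \<in> span ?E" using wedge_span[OF sp] by simp
  qed
  have indD: "independent ?D"
    by (rule independent_mono[OF independent_Basis]) (auto simp: Basis_vec_def)
  have cD: "card ?D = card ?M"
    by (rule card_image) (auto simp: inj_on_def axis_eq_axis)
  have a1: "card ?D \<le> dim ?E" using independent_card_le_dim[OF DE indD] by (simp add: dim_span)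
  have a2: "dim ?E \<le> card ?E" by (rule dim_le_card) (auto intro: span_base)
  have a3: "card ?E \<le> card ?M" by (rule card_image_le) simp
  have e1: "card ?E = card ?M" using a1 a2 a3 cD by linarith
  have e2: "card ?E = dim ?E" using a1 a2 a3 cD by linarith
  have "independent ?E" by (subst card_eq_dim[of ?E ?E]) (auto simp: e2 intro: span_base)
  moreover have "inj_on (Eb m e') ?M" by (rule eq_card_imp_inj_on) (simp_all add: e1)
  ultimately show ?thesis by simp
qed

lemma Eb_functional:
  fixes e' :: "'n::{finite,linorder} \<Rightarrow> real^('n::{finite,linorder})"
  assumes b: "is_basis e'" and J: "card J = m"
  shows "\<exists>\<phi>::real^('n set) \<Rightarrow> real. linear \<phi> \<and> \<phi> (Eb m e' J) = 1 \<and>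
    (\<forall>S. card S = m \<longrightarrow> S \<noteq> J \<longrightarrow> \<phi> (Eb m e' S) = 0)"
proof -
  have inj: "inj_on (Eb m e') {S. card S = m}" and ind: "independent (Eb m e' ` {S. card S = m})"
    using Eb_indep[OF b] by auto
  obtain \<phi> :: "real^('n set) \<Rightarrow> real" where \<phi>: "linear \<phi>"
    "\<forall>x\<in>Eb m e' ` {S. card S = m}. \<phi> x = (if x = Eb m e' J then 1 else 0)"
    using linear_independent_extend[OF ind, of "\<lambda>x. if x = Eb m e' J then (1::real) else 0"] by auto
  have z: "\<forall>S. card S = m \<longrightarrow> S \<noteq> J \<longrightarrow> \<phi> (Eb m e' S) = 0"
  proof (intro allI impI)
    fix S assume that: "card S = m" "S \<noteq> J"
    have "Eb m e' S \<noteq> Eb m e' J" using inj that J by (auto dest: inj_onD)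
    moreover have "Eb m e' S \<in> Eb m e' ` {S. card S = m}" using that by auto
    ultimately show "\<phi> (Eb m e' S) = 0" using \<phi>(2) by auto
  qed
  have o: "\<phi> (Eb m e' J) = 1" using \<phi>(2) J by auto
  show ?thesis using \<phi>(1) z o by blast
qed

definition ins :: "nat \<Rightarrow> real^('n::{finite,linorder}) \<Rightarrow> real^('n set) \<Rightarrow> real^('n set)" where
  "ins j y w = (\<chi> J. if card J = Suc j then (\<Sum>k<Suc j. (-1)^k * y $ (sorted_list_of_set J ! k) *
       w $ (J - {sorted_list_of_set J ! k})) else 0)"

lemma ins_linear_left: "linear (\<lambda>y. ins j y w)"
  by (rule linearI) (simp_all add: ins_def Finite_Cartesian_Product.vec_eq_iff sum.distrib[symmetric] sum_distrib_left algebra_simps)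

lemma ins_linear_right: "linear (ins j y)"
  by (rule linearI) (simp_all add: ins_def Finite_Cartesian_Product.vec_eq_iff sum.distrib[symmetric] sum_distrib_left algebra_simps)

lemma ins_wedge:
  fixes g :: "nat \<Rightarrow> real^('n::{finite,linorder})"
  shows "ins j y (wedge j g) = wedge (Suc j) (\<lambda>a. if a = 0 then y else g (a - 1))"
proof -
  have "ins j y (wedge j g) $ J = wedge (Suc j) (\<lambda>a. if a = 0 then y else g (a - 1)) $ J" for J
  proof (cases "card J = Suc j")
    case True
    show ?thesis using wedge_laplace[OF True, of "\<lambda>a. if a = 0 then y else g (a - 1)"] True
      by (simp add: ins_def)
  qed (simp add: ins_def wedge_def)
  then show ?thesis by (simp add: Finite_Cartesian_Product.vec_eq_iff)
qed

lemma ins_basis: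
  fixes e' :: "'n::{finite,linorder} \<Rightarrow> real^('n::{finite,linorder})"
  assumes I: "card I = j"
  shows "(i \<in> I \<longrightarrow> ins j (e' i) (Eb j e' I) = 0) \<and>
    (i \<notin> I \<longrightarrow> (\<exists>s. (s = 1 \<or> s = -1) \<and> ins j (e' i) (Eb j e' I) = s *\<^sub>R Eb (Suc j) e' (insert i I)))"
proof -
  let ?s = "sorted_list_of_set I"
  define \<psi> where "\<psi> a = (if a = 0 then i else ?s ! (a - 1))" for a
  have ls: "length ?s = j" using I by simp
  have eq: "ins j (e' i) (Eb j e' I) = wedge (Suc j) (e' \<circ> \<psi>)"
    unfolding Eb_def ins_wedge by (rule wedge_cong) (simp add: \<psi>_def)
  have setI: "set ?s = I" using I by (simp add: card_ge_0_finite) 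
  have img: "\<psi> ` {0..<Suc j} = insert i I"
  proof
    show "\<psi> ` {0..<Suc j} \<subseteq> insert i I"
    proof
      fix x assume "x \<in> \<psi> ` {0..<Suc j}"
      then obtain a where a: "a < Suc j" "x = \<psi> a" by auto
      show "x \<in> insert i I"
      proof (cases "a = 0")
        case False
        then have "a - 1 < length ?s" using a ls by simp
        then have "?s ! (a - 1) \<in> set ?s" by (rule nth_mem)
        then show ?thesis using a False setI by (simp add: \<psi>_def)
      qed (simp add: a \<psi>_def)
    qed
    show "insert i I \<subseteq> \<psi> ` {0..<Suc j}"
    proof
      fix x assume "x \<in> insert i I"
      then show "x \<in> \<psi> ` {0..<Suc j}"
      proof
        assume "x = i" then show ?thesis by (auto simp: \<psi>_def image_iff intro!: bexI[of _ 0])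
      next
        assume "x \<in> I"
        then have "x \<in> set ?s" using setI by simp
        then obtain k where k: "k < j" "?s ! k = x" using ls by (metis in_set_conv_nth)
        then have "\<psi> (Suc k) = x" by (simp add: \<psi>_def)
        then show ?thesis using k by (auto simp: image_iff intro!: bexI[of _ "Suc k"])
      qed
    qed
  qed
  show ?thesis
  proof (intro conjI impI)
    assume "i \<in> I"
    then have "i \<in> set ?s" using setI by simp
    then obtain a where a: "a < j" "?s ! a = i" using ls by (metis in_set_conv_nth)
    have "wedge (Suc j) (e' \<circ> \<psi>) = 0"
      by (rule wedge_ident[of 0 "Suc j" "Suc a"]) (use a in \<open>auto simp: \<psi>_def\<close>)
    then show "ins j (e' i) (Eb j e' I) = 0" using eq by simp
  next
    assume i: "i \<notin> I"
    have inj: "inj_on \<psi> {0..<Suc j}"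
    proof (rule inj_onI)
      fix a b assume ab: "a \<in> {0..<Suc j}" "b \<in> {0..<Suc j}" "\<psi> a = \<psi> b"
      have mem: "?s ! (c - 1) \<in> I" if "c \<in> {0..<Suc j}" "c \<noteq> 0" for c
      proof -
        have "c - 1 < length ?s" using that ls by auto
        then show ?thesis using setI by (metis nth_mem)
      qed
      have psiI: "\<psi> c \<in> I" if "c \<in> {0..<Suc j}" "c \<noteq> 0" for c
        using mem[OF that] that by (simp add: \<psi>_def)
      have psi0: "\<psi> 0 = i" by (simp add: \<psi>_def)
      show "a = b"
      proof (cases "a = 0")
        case True
        show ?thesis
        proof (rule ccontr)
          assume "a \<noteq> b" then have "b \<noteq> 0" using True by simp
          then have "\<psi> b \<in> I" using psiI[of b] ab(2) by simp
          then show False using ab(3) True psi0 i by simp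
        qed
      next
        case False
        show ?thesis
        proof (cases "b = 0")
          case True
          have "\<psi> a \<in> I" using psiI[of a] ab(1) False by simp
          then show ?thesis using ab(3) True psi0 i by simp
        next
          case bF: False
          then have "?s ! (a - 1) = ?s ! (b - 1)" using ab False by (simp add: \<psi>_def)
          then have "a - 1 = b - 1" using ab ls nth_eq_iff_index_eq[of ?s "a - 1" "b - 1"] False bF by auto
          then show ?thesis using False bF by simp
        qed
      qed
    qed
    show "\<exists>s. (s = 1 \<or> s = -1) \<and> ins j (e' i) (Eb j e' I) = s *\<^sub>R Eb (Suc j) e' (insert i I)"
    proof -
      have "wedge (Suc j) (e' \<circ> \<psi>) = Eb (Suc j) e' (insert i I) \<or> wedge (Suc j) (e' \<circ> \<psi>) = - Eb (Suc j) e' (insert i I)"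
        using wedge_inj_sign[OF inj, of e'] unfolding img Eb_def .
      then show ?thesis
      proof
        assume "wedge (Suc j) (e' \<circ> \<psi>) = Eb (Suc j) e' (insert i I)"
        then show ?thesis by (intro exI[of _ 1]) (simp add: eq)
      next
        assume "wedge (Suc j) (e' \<circ> \<psi>) = - Eb (Suc j) e' (insert i I)"
        then show ?thesis by (intro exI[of _ "-1"]) (simp add: eq)
      qed
    qed
  qed
qed


definition sg :: "nat \<Rightarrow> ('n::{finite,linorder} \<Rightarrow> real^('n::{finite,linorder})) \<Rightarrow> 'n \<Rightarrow> 'n set \<Rightarrow> real" where
  "sg j e' i I = (SOME s. (s = 1 \<or> s = -1) \<and> ins j (e' i) (Eb j e' I) = s *\<^sub>R Eb (Suc j) e' (insert i I))"

lemma sg_prop: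
  fixes e' :: "'n::{finite,linorder} \<Rightarrow> real^('n::{finite,linorder})"
  assumes "card I = j" "i \<notin> I"
  shows "(sg j e' i I = 1 \<or> sg j e' i I = -1) \<and> ins j (e' i) (Eb j e' I) = sg j e' i I *\<^sub>R Eb (Suc j) e' (insert i I)"
proof -
  have "\<exists>s. (s = 1 \<or> s = -1) \<and> ins j (e' i) (Eb j e' I) = s *\<^sub>R Eb (Suc j) e' (insert i I)"
    using ins_basis[OF assms(1), of i e'] assms(2) by blast
  then show ?thesis unfolding sg_def by (rule someI_ex)
qed

lemma key_sum:
  fixes e' :: "'n::{finite,linorder} \<Rightarrow> real^('n::{finite,linorder})" and \<phi> :: "real^('n set) \<Rightarrow> real"
  assumes J: "card J = Suc j" and lin: "linear \<phi>" and \<phi>1: "\<phi> (Eb (Suc j) e' J) = 1"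
    and \<phi>0: "\<forall>S. card S = Suc j \<longrightarrow> S \<noteq> J \<longrightarrow> \<phi> (Eb (Suc j) e' S) = 0"
    and z: "ins j (\<Sum>i\<in>UNIV. a i *\<^sub>R e' i) (\<Sum>I\<in>{I. card I = j}. c I *\<^sub>R Eb j e' I) = 0"
  shows "(\<Sum>i\<in>J. a i * c (J - {i}) * sg j e' i (J - {i})) = 0"
proof -
  let ?M = "{I::'n set. card I = j}"
  let ?W = "(\<Sum>I\<in>?M. c I *\<^sub>R Eb j e' I)"
  have L: "linear (\<lambda>y. ins j y ?W)" by (rule ins_linear_left)
  have e1: "ins j (\<Sum>i\<in>UNIV. a i *\<^sub>R e' i) ?W = (\<Sum>i\<in>UNIV. a i *\<^sub>R ins j (e' i) ?W)"
    using linear_sum[OF L, of "\<lambda>i. a i *\<^sub>R e' i" UNIV] linear_scale[OF L] by simp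
  have e2: "ins j (e' i) ?W = (\<Sum>I\<in>?M. c I *\<^sub>R ins j (e' i) (Eb j e' I))" for i
  proof -
    have R: "linear (ins j (e' i))" by (rule ins_linear_right)
    show ?thesis using linear_sum[OF R, of "\<lambda>I. c I *\<^sub>R Eb j e' I" ?M] linear_scale[OF R] by simp
  qed
  have inner: "\<phi> (ins j (e' i) (Eb j e' I)) = (if i \<in> J \<and> I = J - {i} then sg j e' i I else 0)"
    if I: "card I = j" for i I
  proof (cases "i \<in> I")
    case True
    have z0: "ins j (e' i) (Eb j e' I) = 0" using ins_basis[OF I, of i e'] True by blast
    have nc: "\<not> (i \<in> J \<and> I = J - {i})" using True by auto
    show ?thesis by (subst if_not_P[OF nc]) (simp add: z0 linear_0[OF lin])
  next
    case False
    have sgp: "ins j (e' i) (Eb j e' I) = sg j e' i I *\<^sub>R Eb (Suc j) e' (insert i I)"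
      using sg_prop[OF I False] by blast
    have ci: "card (insert i I) = Suc j" using I False by simp
    have eqv: "insert i I = J \<longleftrightarrow> (i \<in> J \<and> I = J - {i})" using False by auto
    have "\<phi> (Eb (Suc j) e' (insert i I)) = (if insert i I = J then 1 else 0)"
      using \<phi>1 \<phi>0 ci by auto
    then show ?thesis using sgp linear_scale[OF lin] eqv by simp
  qed
  have "0 = \<phi> (ins j (\<Sum>i\<in>UNIV. a i *\<^sub>R e' i) ?W)" using z linear_0[OF lin] by simp
  also have "\<dots> = \<phi> (\<Sum>i\<in>UNIV. a i *\<^sub>R (\<Sum>I\<in>?M. c I *\<^sub>R ins j (e' i) (Eb j e' I)))"
    unfolding e1 e2 ..
  also have "\<dots> = (\<Sum>i\<in>UNIV. a i * (\<Sum>I\<in>?M. c I * \<phi> (ins j (e' i) (Eb j e' I))))"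
    by (simp add: linear_sum[OF lin] linear_scale[OF lin])
  also have "\<dots> = (\<Sum>i\<in>UNIV. a i * (\<Sum>I\<in>?M. c I * (if i \<in> J \<and> I = J - {i} then sg j e' i I else 0)))"
    by (intro sum.cong refl arg_cong2[where f="(*)"]) (auto simp: inner)
  also have "\<dots> = (\<Sum>i\<in>UNIV. if i \<in> J then a i * c (J - {i}) * sg j e' i (J - {i}) else 0)"
  proof (rule sum.cong[OF refl])
    fix i :: 'n
    show "a i * (\<Sum>I\<in>?M. c I * (if i \<in> J \<and> I = J - {i} then sg j e' i I else 0)) =
       (if i \<in> J then a i * c (J - {i}) * sg j e' i (J - {i}) else 0)"
    proof (cases "i \<in> J")
      case True
      have "J - {i} \<in> ?M" using J True by simp
      then have "(\<Sum>I\<in>?M. c I * (if i \<in> J \<and> I = J - {i} then sg j e' i I else 0))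
          = c (J - {i}) * sg j e' i (J - {i})"
        using True by (simp add: if_distrib[of "(*) _"] sum.delta' cong: if_cong)
      then show ?thesis using True by simp
    qed simp
  qed
  also have "\<dots> = (\<Sum>i\<in>J. a i * c (J - {i}) * sg j e' i (J - {i}))"
    by (simp add: sum.If_cases)
  finally show ?thesis by simp
qed

lemma basis_coords:
  fixes e' :: "'n::{finite,linorder} \<Rightarrow> real^('n::{finite,linorder})"
  assumes b: "is_basis e'"
  shows "\<exists>h::real^('n::{finite,linorder}) \<Rightarrow> real^('n::{finite,linorder}). linear h \<and> inj h \<and> (\<forall>x. x = (\<Sum>i\<in>UNIV. (h x $ i) *\<^sub>R e' i))"
proof -
  define G where "G c = (\<Sum>i\<in>UNIV. (c $ i) *\<^sub>R e' i)" for c :: "real^('n::{finite,linorder})"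
  have linG: "linear G"
    by (rule linearI) (simp_all add: G_def scaleR_add_left sum.distrib scaleR_sum_right)
  have injE: "inj e'" and sp: "span (range e') = UNIV" using b by (auto simp: is_basis_def)
  have "surj G"
  proof -
    have "x \<in> range G" for x
    proof -
      have "x \<in> span (range e')" using sp by simp
      then obtain u where u: "x = (\<Sum>v\<in>range e'. u v *\<^sub>R v)" using span_finite[of "range e'"] by auto
      also have "\<dots> = (\<Sum>i\<in>UNIV. u (e' i) *\<^sub>R e' i)"
        by (subst sum.reindex[OF injE]) simp
      also have "\<dots> = G (\<chi> i. u (e' i))" by (simp add: G_def)
      finally show ?thesis by simp
    qed
    then show ?thesis by auto
  qed
  then obtain h where h: "linear h" "G \<circ> h = id" using linear_surjective_right_inverse[OF linG] by blast
  have hx: "G (h x) = x" for x using h(2) by (metis comp_apply id_apply)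
  have "inj h" by (metis hx injI)
  then show ?thesis using h(1) hx unfolding G_def by metis
qed

lemma proj_surj:
  fixes M :: "(real^('n::{finite,linorder})) set"
  shows "subspace M \<Longrightarrow> m \<le> dim M \<Longrightarrow> \<exists>J. card J = m \<and> (\<forall>t. \<exists>y\<in>M. \<forall>i\<in>J. y $ i = t i)"
proof (induction m arbitrary: M)
  case 0
  then show ?case by (intro exI[of _ "{}"]) (auto intro: subspace_0)
next
  case (Suc m)
  have "M \<noteq> {0}" "M \<noteq> {}" using Suc.prems by auto
  then obtain y0 where y0: "y0 \<in> M" "y0 \<noteq> 0" by auto
  then obtain i0 where i0: "y0 $ i0 \<noteq> 0" by (metis Finite_Cartesian_Product.vec_eq_iff zero_index)
  define y1 where "y1 = (1 / y0 $ i0) *\<^sub>R y0"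
  have y1: "y1 \<in> M" "y1 $ i0 = 1" using y0 i0 Suc.prems(1) by (auto simp: y1_def subspace_scale)
  define M' where "M' = {y\<in>M. y $ i0 = 0}"
  have subM': "subspace M'" using Suc.prems(1) unfolding M'_def subspace_def by auto
  have "M \<subseteq> span (insert y1 M')"
  proof
    fix y assume y: "y \<in> M"
    have "y - (y $ i0) *\<^sub>R y1 \<in> M'" using y y1 Suc.prems(1) by (auto simp: M'_def subspace_diff subspace_scale)
    then have "y - (y $ i0) *\<^sub>R y1 \<in> span (insert y1 M')" by (auto intro: span_base)
    moreover have "(y $ i0) *\<^sub>R y1 \<in> span (insert y1 M')" by (auto intro: span_base span_scale)
    ultimately have "(y - (y $ i0) *\<^sub>R y1) + (y $ i0) *\<^sub>R y1 \<in> span (insert y1 M')" by (rule span_add)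
    then show "y \<in> span (insert y1 M')" by simp
  qed
  then have "dim M \<le> dim (insert y1 M')" using dim_subset dim_span by metis
  also have "\<dots> \<le> dim M' + 1" by (simp add: dim_insert)
  finally have "m \<le> dim M'" using Suc.prems(2) by simp
  then obtain J' where J': "card J' = m" "\<forall>t. \<exists>y\<in>M'. \<forall>i\<in>J'. y $ i = t i"
    using Suc.IH[OF subM'] by blast
  have ni: "i0 \<notin> J'"
  proof
    assume "i0 \<in> J'"
    obtain y where "y \<in> M'" "\<forall>i\<in>J'. y $ i = (1::real)" using J'(2)[rule_format, of "\<lambda>_. 1"] by blast
    then show False using \<open>i0 \<in> J'\<close> by (auto simp: M'_def)
  qed
  show ?case
  proof (intro exI[of _ "insert i0 J'"] conjI allI)
    show "card (insert i0 J') = Suc m" using ni J'(1) by simp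
    fix t :: "'n::{finite,linorder} \<Rightarrow> real"
    obtain y' where y': "y' \<in> M'" "\<forall>i\<in>J'. y' $ i = t i - t i0 * y1 $ i" using J'(2)[rule_format, of "\<lambda>i. t i - t i0 * y1 $ i"] by blast
    have "t i0 *\<^sub>R y1 + y' \<in> M" using y1 y' Suc.prems(1) by (auto simp: M'_def subspace_add subspace_scale)
    moreover have "\<forall>i\<in>insert i0 J'. (t i0 *\<^sub>R y1 + y') $ i = t i"
      using y' y1 by (auto simp: M'_def)
    ultimately show "\<exists>y\<in>M. \<forall>i\<in>insert i0 J'. y $ i = t i" by blast
  qed
qed

lemma subspace_ext_space: "subspace (ext_space j :: (real^('n::finite set)) set)"
  unfolding subspace_def ext_space_def by auto

lemma int_in_scale:
  fixes K :: "'a::real_normed_vector set"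
  assumes W: "subspace W" and cone: "\<forall>x\<in>K. \<forall>c::real. c \<ge> 0 \<longrightarrow> c *\<^sub>R x \<in> K"
    and w: "w \<in> int_in W K" and c: "c > 0"
  shows "c *\<^sub>R w \<in> int_in W K"
proof -
  obtain e where e: "e > 0" "\<forall>y\<in>W. dist y w < e \<longrightarrow> y \<in> K" and wK: "w \<in> K"
    using w unfolding int_in_def by blast
  have "\<forall>y\<in>W. dist y (c *\<^sub>R w) < c * e \<longrightarrow> y \<in> K"
  proof (intro ballI impI)
    fix y assume y: "y \<in> W" "dist y (c *\<^sub>R w) < c * e"
    have "(1/c) *\<^sub>R y \<in> W" using y W by (simp add: subspace_scale)
    moreover have "dist ((1/c) *\<^sub>R y) w < e"
    proof -
      have "(1/c) *\<^sub>R y - w = (1/c) *\<^sub>R (y - c *\<^sub>R w)" using c by (simp add: scaleR_diff_right)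
      then have "dist ((1/c) *\<^sub>R y) w = (1/c) * dist y (c *\<^sub>R w)" using c by (simp add: dist_norm)
      also have "\<dots> < (1/c) * (c * e)" using y c by (intro mult_strict_left_mono) auto
      finally show ?thesis using c by simp
    qed
    ultimately have "(1/c) *\<^sub>R y \<in> K" using e by blast
    then show "y \<in> K" using cone[rule_format, of "(1/c) *\<^sub>R y" c] c by simp
  qed
  moreover have "c *\<^sub>R w \<in> K" using cone wK c by simp
  ultimately show ?thesis unfolding int_in_def using e c by (auto intro!: exI[of _ "c * e"])
qed

lemma int_in_neg:
  fixes K :: "'a::real_normed_vector set"
  assumes W: "subspace W" and w: "w \<in> int_in W K"
  shows "- w \<in> int_in W (uminus ` K)"
proof -
  obtain e where e: "e > 0" "\<forall>y\<in>W. dist y w < e \<longrightarrow> y \<in> K" and wK: "w \<in> K"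
    using w unfolding int_in_def by blast
  have "\<forall>y\<in>W. dist y (- w) < e \<longrightarrow> y \<in> uminus ` K"
  proof (intro ballI impI)
    fix y assume y: "y \<in> W" "dist y (- w) < e"
    have "- y \<in> W" using y W by (simp add: subspace_neg)
    moreover have "dist (- y) w < e" using y by (simp add: dist_norm norm_minus_commute add.commute)
    ultimately have "- y \<in> K" using e by blast
    then show "y \<in> uminus ` K" by (metis image_eqI minus_minus)
  qed
  then show ?thesis unfolding int_in_def using e wK by auto
qed

lemma int_in_neg':
  fixes K :: "'a::real_normed_vector set"
  assumes W: "subspace W" and w: "w \<in> int_in W (uminus ` K)"
  shows "- w \<in> int_in W K"
proof -
  have "- w \<in> int_in W (uminus ` uminus ` K)" by (rule int_in_neg[OF W w])
  moreover have "uminus ` uminus ` K = K" by (simp add: image_image)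
  ultimately show ?thesis by simp
qed

lemma P_scale:
  fixes K :: "'a::real_normed_vector set"
  assumes W: "subspace W" and cone: "\<forall>x\<in>K. \<forall>c::real. c \<ge> 0 \<longrightarrow> c *\<^sub>R x \<in> K"
    and w: "w \<in> int_in W K \<union> int_in W (uminus ` K)" and c: "c \<noteq> 0"
  shows "c *\<^sub>R w \<in> int_in W K \<union> int_in W (uminus ` K)"
proof -
  have cone': "\<forall>x\<in>uminus ` K. \<forall>c::real. c \<ge> 0 \<longrightarrow> c *\<^sub>R x \<in> uminus ` K"
  proof (intro ballI allI impI)
    fix x and c :: real assume "x \<in> uminus ` K" "c \<ge> 0"
    then obtain k where "k \<in> K" "x = - k" by auto
    then have "c *\<^sub>R k \<in> K" using cone \<open>c \<ge> 0\<close> by blast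
    then show "c *\<^sub>R x \<in> uminus ` K" using \<open>x = - k\<close> by (metis image_eqI scaleR_minus_right)
  qed
  show ?thesis
  proof (cases "c > 0")
    case True
    then show ?thesis using w int_in_scale[OF W cone _ True] int_in_scale[OF W cone' _ True] by blast
  next
    case False
    then have c': "- c > 0" using c by simp
    have eq: "c *\<^sub>R w = (- c) *\<^sub>R (- w)" by simp
    from w show ?thesis
    proof
      assume "w \<in> int_in W K"
      then have "- w \<in> int_in W (uminus ` K)" by (rule int_in_neg[OF W])
      then show ?thesis unfolding eq using int_in_scale[OF W cone' _ c'] by blast
    next
      assume "w \<in> int_in W (uminus ` K)"
      then have "- w \<in> int_in W K" by (rule int_in_neg'[OF W])
      then show ?thesis unfolding eq using int_in_scale[OF W cone _ c'] by blast
    qed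
  qed
qed

lemma zero_notin_P:
  fixes K :: "'a::real_normed_vector set"
  assumes W: "subspace W" and pc: "proper_cone_in W K" and v: "v \<in> W" "v \<noteq> 0"
  shows "0 \<notin> int_in W K \<union> int_in W (uminus ` K)"
proof -
  have ptd: "K \<inter> uminus ` K = {0}" using pc by (simp add: proper_cone_in_def)
  have noK: "0 \<notin> int_in W K"
  proof
    assume "0 \<in> int_in W K"
    then obtain e where e: "e > 0" "\<forall>y\<in>W. dist y 0 < e \<longrightarrow> y \<in> K" unfolding int_in_def by blast
    define y where "y = (e / (2 * norm v)) *\<^sub>R v"
    have nv: "norm v > 0" using v by simp
    have ny: "norm y = e / 2" using nv e by (simp add: y_def)
    have yW: "y \<in> W" "- y \<in> W" using v W by (auto simp: y_def subspace_scale subspace_neg)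
    have "y \<in> K" "- y \<in> K" using e yW ny by auto
    then have "y \<in> K \<inter> uminus ` K" by (metis IntI image_eqI minus_minus)
    then have "y = 0" using ptd by blast
    then show False using ny e by simp
  qed
  moreover have "0 \<notin> int_in W (uminus ` K)"
  proof
    assume "0 \<in> int_in W (uminus ` K)"
    then have "- 0 \<in> int_in W K" by (rule int_in_neg'[OF W])
    then show False using noK by simp
  qed
  ultimately show ?thesis by blast
qed

lemma cone_repr:
  fixes e' :: "'n::{finite,linorder} \<Rightarrow> real^('n::{finite,linorder})"
  assumes pc: "proper_cone_in (ext_space j) K" and Kb: "K \<subseteq> ext_basic_cone j e' \<sigma>"
    and w: "w \<in> int_in (ext_space j) K"
  shows "\<exists>\<gamma>. (\<forall>I. \<gamma> I > 0) \<and> w = (\<Sum>I\<in>{I. card I = j}. (\<gamma> I * \<sigma> I) *\<^sub>R Eb j e' I)"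
proof -
  let ?M = "{I::'n set. card I = j}"
  define u where "u = (\<Sum>I\<in>?M. \<sigma> I *\<^sub>R Eb j e' I)"
  have EW: "Eb j e' I \<in> ext_space j" for I by (simp add: Eb_def ext_space_def wedge_def)
  have uW: "u \<in> ext_space j" unfolding u_def
    by (rule subspace_sum[OF subspace_ext_space]) (rule subspace_scale[OF subspace_ext_space EW])
  obtain e where e: "e > 0" "\<forall>y\<in>ext_space j. dist y w < e \<longrightarrow> y \<in> K" and wK: "w \<in> K"
    using w unfolding int_in_def by blast
  have wW: "w \<in> ext_space j" using wK pc by (auto simp: proper_cone_in_def)
  define d where "d = e / (2 * (norm u + 1))"
  have "(2::real) * (norm u + 1) > 0" by (smt (verit) norm_ge_zero)
  then have d: "d > 0" using e unfolding d_def by (intro divide_pos_pos) auto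
  have "d * norm u < e"
  proof -
    have "d * norm u \<le> d * (norm u + 1)" using d by simp
    also have "\<dots> = e / 2"
    proof -
      have nz: "norm u + 1 \<noteq> 0" by (smt (verit) norm_ge_zero)
      show ?thesis unfolding d_def using nz by (simp add: field_simps)
    qed
    finally show ?thesis using e by simp
  qed
  then have "dist (w - d *\<^sub>R u) w < e" using d by (simp add: dist_norm)
  moreover have "w - d *\<^sub>R u \<in> ext_space j"
    using wW uW by (simp add: subspace_diff[OF subspace_ext_space] subspace_scale[OF subspace_ext_space])
  ultimately have "w - d *\<^sub>R u \<in> ext_basic_cone j e' \<sigma>" using e Kb by blast
  then obtain c where c: "\<forall>I. c I \<ge> 0"
    "w - d *\<^sub>R u = (\<Sum>I\<in>?M. c I *\<^sub>R (\<sigma> I *\<^sub>R wedge j (\<lambda>a. e' (sorted_list_of_set I ! a))))"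
    unfolding ext_basic_cone_def by blast
  have "w = (\<Sum>I\<in>?M. c I *\<^sub>R (\<sigma> I *\<^sub>R wedge j (\<lambda>a. e' (sorted_list_of_set I ! a)))) + d *\<^sub>R u"
    using c(2) by (metis diff_add_cancel)
  also have "\<dots> = (\<Sum>I\<in>?M. ((c I + d) * \<sigma> I) *\<^sub>R Eb j e' I)"
    unfolding u_def Eb_def by (simp add: scaleR_sum_right sum.distrib[symmetric] algebra_simps)
  finally show ?thesis using c(1) d by (intro exI[of _ "\<lambda>I. c I + d"]) (auto simp: add_nonneg_pos)
qed


lemma upper_bound:
  fixes e' :: "'n::{finite,linorder} \<Rightarrow> real^('n::{finite,linorder})"
    and S L :: "(real^('n::{finite,linorder})) set"
  assumes b: "is_basis e'" and sig: "\<forall>I. \<sigma> I = 1 \<or> \<sigma> I = -1"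
    and Kb: "K \<subseteq> ext_basic_cone j e' \<sigma>" and pc: "proper_cone_in (ext_space j) K"
    and j1: "1 \<le> j"
    and S: "\<forall>x\<in>S. \<exists>f. f 0 = x \<and> wedge j f \<in> int_in (ext_space j) K \<union> int_in (ext_space j) (uminus ` K)"
    and L: "subspace L" "L \<subseteq> closure S"
  shows "dim L \<le> j"
proof (rule ccontr)
  assume "\<not> dim L \<le> j"
  then have dL: "Suc j \<le> dim L" by simp
  obtain h :: "real^('n::{finite,linorder}) \<Rightarrow> real^('n::{finite,linorder})" where h: "linear h" "inj h" "\<forall>x. x = (\<Sum>i\<in>UNIV. (h x $ i) *\<^sub>R e' i)"
    using basis_coords[OF b] by blast
  have subM: "subspace (h ` L)" by (rule linear_subspace_image[OF h(1) L(1)])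
  have "dim (h ` L) = dim L" by (rule dim_image_eq[OF h(1)]) (use h(2) in \<open>auto simp: inj_on_def inj_def\<close>)
  then obtain J where J: "card J = Suc j" "\<forall>t. \<exists>y\<in>h ` L. \<forall>i\<in>J. y $ i = t i"
    using proj_surj[OF subM, of "Suc j"] dL by auto
  obtain \<phi> :: "real^(('n::{finite,linorder}) set) \<Rightarrow> real" where \<phi>: "linear \<phi>" "\<phi> (Eb (Suc j) e' J) = 1"
    "\<forall>S. card S = Suc j \<longrightarrow> S \<noteq> J \<longrightarrow> \<phi> (Eb (Suc j) e' S) = 0"
    using Eb_functional[OF b J(1)] by blast
  define \<tau> where "\<tau> i = \<sigma> (J - {i}) * sg j e' i (J - {i})" for i
  have tau: "\<tau> i = 1 \<or> \<tau> i = -1" if "i \<in> J" for i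
  proof -
    have "card (J - {i}) = j" using J(1) that by simp
    then have "sg j e' i (J - {i}) = 1 \<or> sg j e' i (J - {i}) = -1" using sg_prop[of "J - {i}" j i e'] by auto
    then show ?thesis using sig[rule_format, of "J - {i}"] by (auto simp: \<tau>_def)
  qed
  define C where "C = {x. \<not> (\<forall>i\<in>J. 0 < \<tau> i * h x $ i) \<and> \<not> (\<forall>i\<in>J. \<tau> i * h x $ i < 0)}"
  have finJ: "finite J" "J \<noteq> {}" using J(1) by auto
  have SC: "S \<subseteq> C"
  proof
    fix x assume "x \<in> S"
    then obtain f where f: "f 0 = x" "wedge j f \<in> int_in (ext_space j) K \<union> int_in (ext_space j) (uminus ` K)"
      using S by blast
    let ?M = "{I::('n::{finite,linorder}) set. card I = j}"
    obtain \<gamma> \<epsilon> where g: "\<forall>I. \<gamma> I > 0" "\<epsilon> = 1 \<or> \<epsilon> = -1"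
      "wedge j f = \<epsilon> *\<^sub>R (\<Sum>I\<in>?M. (\<gamma> I * \<sigma> I) *\<^sub>R Eb j e' I)"
    proof -
      from f(2) show ?thesis
      proof
        assume "wedge j f \<in> int_in (ext_space j) K"
        then obtain \<gamma> where "\<forall>I. \<gamma> I > 0" "wedge j f = (\<Sum>I\<in>?M. (\<gamma> I * \<sigma> I) *\<^sub>R Eb j e' I)"
          using cone_repr[OF pc Kb] by blast
        then show ?thesis using that[of \<gamma> 1] by simp
      next
        assume "wedge j f \<in> int_in (ext_space j) (uminus ` K)"
        then have "- wedge j f \<in> int_in (ext_space j) K" by (rule int_in_neg'[OF subspace_ext_space])
        then obtain \<gamma> where "\<forall>I. \<gamma> I > 0" "- wedge j f = (\<Sum>I\<in>?M. (\<gamma> I * \<sigma> I) *\<^sub>R Eb j e' I)"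
          using cone_repr[OF pc Kb] by blast
        then show ?thesis using that[of \<gamma> "-1"] by (metis minus_minus scaleR_minus1_left)
      qed
    qed
    have z0: "ins j x (wedge j f) = 0"
    proof -
      have "ins j x (wedge j f) = wedge (Suc j) (\<lambda>a. if a = 0 then x else f (a - 1))" by (rule ins_wedge)
      also have "\<dots> = 0" by (rule wedge_ident[of 0 "Suc j" 1]) (use j1 f(1) in auto)
      finally show ?thesis .
    qed
    have R: "linear (ins j x)" by (rule ins_linear_right)
    have "\<epsilon> *\<^sub>R ins j x (\<Sum>I\<in>?M. (\<gamma> I * \<sigma> I) *\<^sub>R Eb j e' I) = 0"
      using z0 g(3) linear_scale[OF R] by simp
    then have z1: "ins j x (\<Sum>I\<in>?M. (\<gamma> I * \<sigma> I) *\<^sub>R Eb j e' I) = 0" using g(2) by auto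
    have hx: "(\<Sum>i\<in>UNIV. (h x $ i) *\<^sub>R e' i) = x" using h(3) by metis
    have z2: "ins j (\<Sum>i\<in>UNIV. (h x $ i) *\<^sub>R e' i) (\<Sum>I\<in>?M. (\<gamma> I * \<sigma> I) *\<^sub>R Eb j e' I) = 0"
      unfolding hx by (rule z1)
    have ks: "(\<Sum>i\<in>J. h x $ i * (\<gamma> (J - {i}) * \<sigma> (J - {i})) * sg j e' i (J - {i})) = 0"
      by (rule key_sum[OF J(1) \<phi>(1) \<phi>(2) \<phi>(3) z2])
    have ks2: "(\<Sum>i\<in>J. \<gamma> (J - {i}) * (\<tau> i * h x $ i)) = 0"
      using ks by (simp add: \<tau>_def mult.commute mult.left_commute)
    have A: "\<not> (\<forall>i\<in>J. 0 < \<tau> i * h x $ i)"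
    proof
      assume pos: "\<forall>i\<in>J. 0 < \<tau> i * h x $ i"
      have "0 < (\<Sum>i\<in>J. \<gamma> (J - {i}) * (\<tau> i * h x $ i))"
        by (rule sum_pos[OF finJ]) (use pos g(1) in auto)
      then show False using ks2 by simp
    qed
    have B: "\<not> (\<forall>i\<in>J. \<tau> i * h x $ i < 0)"
    proof
      assume neg: "\<forall>i\<in>J. \<tau> i * h x $ i < 0"
      have "0 < (\<Sum>i\<in>J. \<gamma> (J - {i}) * (- (\<tau> i * h x $ i)))"
        by (rule sum_pos[OF finJ]) (use neg g(1) in \<open>auto intro: mult_pos_neg\<close>)
      then show False using ks2 by (simp add: sum_negf)
    qed
    show "x \<in> C" using A B by (simp add: C_def)
  qed
  have blh: "bounded_linear h" using h(1) by (simp add: linear_conv_bounded_linear)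
  have cont: "continuous_on UNIV (\<lambda>x. \<tau> i * h x $ i)" for i
  proof -
    have "bounded_linear (\<lambda>x. h x $ i)" by (rule bounded_linear_compose[OF bounded_linear_vec_nth blh])
    then have "continuous_on UNIV (\<lambda>x. h x $ i)" by (rule linear_continuous_on)
    then show ?thesis by (rule continuous_on_mult_left)
  qed
  have oA: "open {x. \<forall>i\<in>J. 0 < \<tau> i * h x $ i}"
  proof -
    have "{x. \<forall>i\<in>J. 0 < \<tau> i * h x $ i} = (\<Inter>i\<in>J. {x. 0 < \<tau> i * h x $ i})" by auto
    moreover have "open {x. (\<lambda>x. 0) x < \<tau> i * h x $ i}" for i
      by (rule open_Collect_less[OF continuous_on_const cont])
    ultimately show ?thesis using finJ(1) by auto
  qed
  have oB: "open {x. \<forall>i\<in>J. \<tau> i * h x $ i < 0}"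
  proof -
    have "{x. \<forall>i\<in>J. \<tau> i * h x $ i < 0} = (\<Inter>i\<in>J. {x. \<tau> i * h x $ i < 0})" by auto
    moreover have "open {x. \<tau> i * h x $ i < (\<lambda>x. 0) x}" for i
      by (rule open_Collect_less[OF cont continuous_on_const])
    ultimately show ?thesis using finJ(1) by auto
  qed
  have "C = - ({x. \<forall>i\<in>J. 0 < \<tau> i * h x $ i} \<union> {x. \<forall>i\<in>J. \<tau> i * h x $ i < 0})"
    by (auto simp: C_def)
  then have "closed C" using open_Un[OF oA oB] by (simp add: closed_def)
  then have LC: "L \<subseteq> C" using L(2) SC closure_minimal by blast
  obtain y where y: "y \<in> h ` L" "\<forall>i\<in>J. y $ i = \<tau> i" using J(2) by blast
  then obtain x where x: "x \<in> L" "h x = y" by auto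
  have "\<forall>i\<in>J. 0 < \<tau> i * h x $ i" using x y tau by fastforce
  then have "x \<notin> C" by (simp add: C_def)
  then show False using LC x(1) by blast
qed

lemma S_scale:
  fixes Q :: "(nat \<Rightarrow> real^('n::{finite,linorder})) \<Rightarrow> bool" and P :: "(real^(('n::{finite,linorder}) set)) set"
  assumes Qinv: "\<forall>f y. Q (f(0 := y)) = Q f"
    and Pscale: "\<forall>w c. w \<in> P \<longrightarrow> c \<noteq> 0 \<longrightarrow> c *\<^sub>R w \<in> P"
    and j1: "1 \<le> j"
    and x: "x \<in> {x. \<exists>f. f 0 = x \<and> Q f \<and> wedge j f \<in> P}" and c: "c \<noteq> 0"
  shows "c *\<^sub>R x \<in> {x. \<exists>f. f 0 = x \<and> Q f \<and> wedge j f \<in> P}"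
proof -
  obtain f where f: "f 0 = x" "Q f" "wedge j f \<in> P" using x by blast
  have lin: "linear (\<lambda>y. wedge j (f(0 := y)))" by (rule wedge_row_linear) (use j1 in simp)
  have "wedge j (f(0 := c *\<^sub>R x)) = c *\<^sub>R wedge j (f(0 := x))" using linear_scale[OF lin] by simp
  also have "f(0 := x) = f" using f(1) by auto
  finally have we: "wedge j (f(0 := c *\<^sub>R x)) = c *\<^sub>R wedge j f" .
  have "wedge j (f(0 := c *\<^sub>R x)) \<in> P" unfolding we using Pscale f(3) c by blast
  moreover have "Q (f(0 := c *\<^sub>R x))" using Qinv f(2) by simp
  ultimately show ?thesis by (intro CollectI exI[of _ "f(0 := c *\<^sub>R x)"]) simp
qed

lemma closure_S_scale:
  fixes Q :: "(nat \<Rightarrow> real^('n::{finite,linorder})) \<Rightarrow> bool" and P :: "(real^(('n::{finite,linorder}) set)) set"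
  assumes Qinv: "\<forall>f y. Q (f(0 := y)) = Q f"
    and Pscale: "\<forall>w c. w \<in> P \<longrightarrow> c \<noteq> 0 \<longrightarrow> c *\<^sub>R w \<in> P"
    and j1: "1 \<le> j"
    and x: "x \<in> closure {x. \<exists>f. f 0 = x \<and> Q f \<and> wedge j f \<in> P}"
  shows "\<alpha> *\<^sub>R x \<in> closure {x. \<exists>f. f 0 = x \<and> Q f \<and> wedge j f \<in> P}"
proof -
  let ?S = "{x. \<exists>f. f 0 = x \<and> Q f \<and> wedge j f \<in> P}"
  have sc: "c *\<^sub>R y \<in> ?S" if "y \<in> ?S" "c \<noteq> 0" for y c
    using S_scale[OF Qinv Pscale j1 that] .
  show ?thesis
  proof (cases "\<alpha> = 0")
    case False
    have "\<alpha> *\<^sub>R x \<in> (*\<^sub>R) \<alpha> ` closure ?S" using x by blast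
    also have "\<dots> = closure ((*\<^sub>R) \<alpha> ` ?S)" by (rule closure_scaleR)
    also have "\<dots> \<subseteq> closure ?S" by (rule closure_mono) (use sc False in auto)
    finally show ?thesis .
  next
    case True
    have "?S \<noteq> {}"
    proof
      assume "?S = {}"
      then show False using x by (simp only: closure_empty empty_iff)
    qed
    then obtain s where s: "s \<in> ?S" by blast
    have "0 \<in> closure ?S"
    proof (subst closure_approachable, intro allI impI)
      fix e :: real assume e: "e > 0"
      define d where "d = e / (2 * (norm s + 1))"
      have pos: "(2::real) * (norm s + 1) > 0" by (smt (verit) norm_ge_zero)
      then have d: "d > 0" using e unfolding d_def by (intro divide_pos_pos) auto
      have "d * norm s < e"
      proof -
        have "d * norm s \<le> d * (norm s + 1)" using d by simp
        also have "\<dots> = e / 2"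
        proof -
          have nz: "norm s + 1 \<noteq> 0" by (smt (verit) norm_ge_zero)
          show ?thesis unfolding d_def using nz by (simp add: field_simps)
        qed
        finally show ?thesis using e by simp
      qed
      moreover have "d *\<^sub>R s \<in> ?S" using sc[OF s] d by simp
      ultimately show "\<exists>y\<in>?S. dist y 0 < e" using d by (intro bexI[of _ "d *\<^sub>R s"]) auto
    qed
    then show ?thesis using True by simp
  qed
qed

lemma S_lower:
  fixes Q :: "(nat \<Rightarrow> real^('n::{finite,linorder})) \<Rightarrow> bool" and P :: "(real^(('n::{finite,linorder}) set)) set"
  assumes Qinv: "\<forall>f y. Q (f(0 := y)) = Q f"
    and Pscale: "\<forall>w c. w \<in> P \<longrightarrow> c \<noteq> 0 \<longrightarrow> c *\<^sub>R w \<in> P"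
    and P0: "0 \<notin> P"
    and j1: "1 \<le> j"
    and ne: "{x. \<exists>f. f 0 = x \<and> Q f \<and> wedge j f \<in> P} \<noteq> {}"
  shows "\<exists>L. subspace L \<and> dim L = j \<and> L \<subseteq> closure {x. \<exists>f. f 0 = x \<and> Q f \<and> wedge j f \<in> P}"
proof -
  let ?S = "{x. \<exists>f. f 0 = x \<and> Q f \<and> wedge j f \<in> P}"
  obtain f where f: "Q f" "wedge j f \<in> P" using ne by blast
  have w0: "wedge j f \<noteq> 0" using f(2) P0 by auto
  have injf: "inj_on f {..<j}"
  proof (rule inj_onI, rule ccontr)
    fix a b assume ab: "a \<in> {..<j}" "b \<in> {..<j}" "f a = f b" "a \<noteq> b"
    then have "wedge j f = 0" by (intro wedge_ident[of a j b]) auto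
    then show False using w0 by simp
  qed
  let ?F = "f ` {..<j}"
  have indep: "independent ?F"
  proof
    assume "dependent ?F"
    then obtain a where a: "a \<in> ?F" "a \<in> span (?F - {a})" unfolding dependent_def by blast
    then obtain k0 where k0: "k0 < j" "a = f k0" by auto
    have Fm: "?F - {a} = f ` ({..<j} - {k0})"
      using inj_on_image_set_diff[OF injf, of "{..<j}" "{k0}"] k0 by auto
    obtain u where u: "a = (\<Sum>v\<in>?F - {a}. u v *\<^sub>R v)"
      using a(2) span_finite[of "?F - {a}"] by auto
    have injr: "inj_on f ({..<j} - {k0})" using injf by (rule inj_on_subset) auto
    have "a = (\<Sum>k\<in>{..<j} - {k0}. u (f k) *\<^sub>R f k)"
      using u unfolding Fm by (simp add: sum.reindex[OF injr])
    also have "\<dots> = (\<Sum>k<j. (if k = k0 then 0 else u (f k)) *\<^sub>R f k)"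
    proof -
      have "(\<Sum>k<j. (if k = k0 then 0 else u (f k)) *\<^sub>R f k) =
          (if k0 = k0 then 0 else u (f k0)) *\<^sub>R f k0 + (\<Sum>k\<in>{..<j} - {k0}. (if k = k0 then 0 else u (f k)) *\<^sub>R f k)"
        by (rule sum.remove) (use k0 in auto)
      also have "\<dots> = (\<Sum>k\<in>{..<j} - {k0}. u (f k) *\<^sub>R f k)"
      proof -
        have "(\<Sum>k\<in>{..<j} - {k0}. (if k = k0 then 0 else u (f k)) *\<^sub>R f k) = (\<Sum>k\<in>{..<j} - {k0}. u (f k) *\<^sub>R f k)"
          by (rule sum.cong) auto
        then show ?thesis by simp
      qed
      finally show ?thesis by simp
    qed
    finally have fa: "f k0 = (\<Sum>k<j. (if k = k0 then 0 else u (f k)) *\<^sub>R f k)" using k0 by simp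
    have "wedge j (f(k0 := (\<Sum>k<j. (if k = k0 then 0 else u (f k)) *\<^sub>R f k))) =
        (if k0 = k0 then 0 else u (f k0)) *\<^sub>R wedge j f"
      by (rule wedge_replace) (use k0 in simp)
    moreover have "f(k0 := (\<Sum>k<j. (if k = k0 then 0 else u (f k)) *\<^sub>R f k)) = f"
      unfolding fa[symmetric] by (rule fun_upd_triv)
    ultimately have "wedge j f = 0" by simp
    then show False using w0 by simp
  qed
  have dimF: "dim (span ?F) = j"
    using dim_eq_card_independent[OF indep] card_image[OF injf] by (simp add: dim_span)
  have sub: "span ?F \<subseteq> closure ?S"
  proof
    fix x assume "x \<in> span ?F"
    then obtain u where u: "x = (\<Sum>v\<in>?F. u v *\<^sub>R v)" using span_finite[of ?F] by auto
    define t where "t k = u (f k)" for k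
    have xt: "x = (\<Sum>k<j. t k *\<^sub>R f k)" using u by (simp add: sum.reindex[OF injf] t_def)
    have mem: "x + \<epsilon> *\<^sub>R f 0 \<in> ?S" if "t 0 + \<epsilon> \<noteq> 0" for \<epsilon>
    proof -
      define t' where "t' k = t k + (if k = 0 then \<epsilon> else 0)" for k
      have j0: "0 \<in> {..<j}" using j1 by simp
      have "(\<Sum>k<j. t' k *\<^sub>R f k) = (\<Sum>k<j. t k *\<^sub>R f k) + (\<Sum>k<j. (if k = 0 then \<epsilon> else 0) *\<^sub>R f k)"
        by (simp add: t'_def scaleR_add_left sum.distrib)
      also have "(\<Sum>k<j. (if k = 0 then \<epsilon> else 0) *\<^sub>R f k) = \<epsilon> *\<^sub>R f 0"
        using j0 by (simp add: if_distrib[of "\<lambda>c. c *\<^sub>R _"] sum.delta cong: if_cong)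
      finally have e: "x + \<epsilon> *\<^sub>R f 0 = (\<Sum>k<j. t' k *\<^sub>R f k)" using xt by simp
      have "wedge j (f(0 := (\<Sum>k<j. t' k *\<^sub>R f k))) = t' 0 *\<^sub>R wedge j f"
        by (rule wedge_replace) (use j1 in simp)
      then have "wedge j (f(0 := x + \<epsilon> *\<^sub>R f 0)) \<in> P"
        using e Pscale f(2) that by (simp add: t'_def)
      moreover have "Q (f(0 := x + \<epsilon> *\<^sub>R f 0))" using Qinv f(1) by simp
      ultimately show ?thesis by (intro CollectI exI[of _ "f(0 := x + \<epsilon> *\<^sub>R f 0)"]) simp
    qed
    show "x \<in> closure ?S"
    proof (cases "t 0 = 0")
      case False
      then have "x \<in> ?S" using mem[of 0] by simp
      then show ?thesis by (rule closure_subset[THEN subsetD])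
    next
      case True
      show ?thesis
      proof (subst closure_approachable, intro allI impI)
        fix e :: real assume e: "e > 0"
        define d where "d = e / (2 * (norm (f 0) + 1))"
        have pos: "(2::real) * (norm (f 0) + 1) > 0" by (smt (verit) norm_ge_zero)
        then have d: "d > 0" using e unfolding d_def by (intro divide_pos_pos) auto
        have "d * norm (f 0) < e"
        proof -
          have "d * norm (f 0) \<le> d * (norm (f 0) + 1)" using d by simp
          also have "\<dots> = e / 2"
          proof -
            have nz: "norm (f 0) + 1 \<noteq> 0" by (smt (verit) norm_ge_zero)
            show ?thesis unfolding d_def using nz by (simp add: field_simps)
          qed
          finally show ?thesis using e by simp
        qed
        moreover have "x + d *\<^sub>R f 0 \<in> ?S" using mem[of d] True d by simp
        ultimately show "\<exists>y\<in>?S. dist y x < e" using d by (intro bexI[of _ "x + d *\<^sub>R f 0"]) (auto simp: dist_norm)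
      qed
    qed
  qed
  show ?thesis using dimF sub by (intro exI[of _ "span ?F"]) (auto simp: subspace_span)
qed

theorem theorem6:
  fixes K1 :: "(real ^ ('n::{finite,linorder})) set"
    and K :: "nat \<Rightarrow> (real ^ ('n set)) set"
  assumes "proper_cone_in UNIV K1"
    and "\<forall>j\<in>{2..CARD('n)}. proper_cone_in (ext_space j) (K j)"
    and "\<forall>j\<in>{2..CARD('n)}. \<exists>e' K'. is_basis e' \<and> is_ext_basic_cone j e' K' \<and> K j \<subseteq> K'"
  shows "\<forall>j\<in>{2..CARD('n)}. T K1 K j \<noteq> {} \<longrightarrow> cone_of_rank (T K1 K j) j"
proof (intro ballI impI)
  fix j assume jr: "j \<in> {2..CARD('n)}" and ne: "T K1 K j \<noteq> {}"
  define m where "m = j - 2"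
  have j2: "2 \<le> j" using jr by simp
  have jm: "j = Suc (Suc m)" unfolding m_def using j2 by presburger
  let ?W = "ext_space j :: (real^(('n::{finite,linorder}) set)) set"
  let ?P = "int_in ?W (K j) \<union> int_in ?W (uminus ` K j)"
  let ?Q = "\<lambda>f::nat \<Rightarrow> real^('n::{finite,linorder}). \<forall>i\<in>{1..Suc m}. f i \<in> T K1 K i"
  let ?S = "{x. \<exists>f. f 0 = x \<and> ?Q f \<and> wedge j f \<in> ?P}"
  have Teq: "T K1 K j = closure ?S" by (simp add: jm)
  have pc: "proper_cone_in ?W (K j)" using assms(2) jr by blast
  obtain e' K' where eK: "is_basis e'" "is_ext_basic_cone j e' K'" "K j \<subseteq> K'" using assms(3) jr by blast
  obtain \<sigma> where sig: "\<forall>I. \<sigma> I = 1 \<or> \<sigma> I = -1" "K' = ext_basic_cone j e' \<sigma>"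
    using eK(2) unfolding is_ext_basic_cone_def by blast
  have Kb: "K j \<subseteq> ext_basic_cone j e' \<sigma>" using eK(3) sig(2) by simp
  have cone: "\<forall>x\<in>K j. \<forall>c::real. c \<ge> 0 \<longrightarrow> c *\<^sub>R x \<in> K j" using pc by (simp add: proper_cone_in_def)
  have Qinv: "\<forall>f y. ?Q (f(0 := y)) = ?Q f" by auto
  have Pscale: "\<forall>w c. w \<in> ?P \<longrightarrow> c \<noteq> 0 \<longrightarrow> c *\<^sub>R w \<in> ?P"
    using P_scale[OF subspace_ext_space cone] by blast
  obtain I :: "'n set" where I: "card I = j"
    using obtain_subset_with_card_n[of j "UNIV :: 'n set"] jr by auto
  have vW: "axis I (1::real) \<in> ?W" using I by (auto simp: ext_space_def axis_def)
  have P0: "0 \<notin> ?P" by (rule zero_notin_P[OF subspace_ext_space pc vW]) simp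
  have j1: "1 \<le> j" using jm by simp
  have neS: "?S \<noteq> {}"
  proof
    assume "?S = {}"
    then show False using ne Teq by simp
  qed
  have S': "\<forall>x\<in>?S. \<exists>f. f 0 = x \<and> wedge j f \<in> ?P" by blast
  show "cone_of_rank (T K1 K j) j"
    unfolding cone_of_rank_def Teq
  proof (intro conjI ballI allI impI)
    show "closed (closure ?S)" by simp
  next
    fix x and \<alpha> :: real assume "x \<in> closure ?S"
    then show "\<alpha> *\<^sub>R x \<in> closure ?S" by (rule closure_S_scale[OF Qinv Pscale j1])
  next
    show "\<exists>L. subspace L \<and> dim L = j \<and> L \<subseteq> closure ?S" by (rule S_lower[OF Qinv Pscale P0 j1 neS])
  next
    fix L :: "(real^('n::{finite,linorder})) set" assume "subspace L \<and> L \<subseteq> closure ?S"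
    then show "dim L \<le> j" using upper_bound[OF eK(1) sig(1) Kb pc j1 S'] by blast
  qed
qed

end
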